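(* Let $E$ be a Hermite–Biehler entire function with no real zeros and $E(0) = 1$. If $f \in \mathcal{H}^{\infty}(E)$ is a real entire function with $f(0) = \lVert f/E\rVert_\infty = 1$, then $$f(x) \geq A(x), \qquad b_{-1} \leq x \leq b_1,$$ where $b_{-1}$ is the first negative zero of $B$ and $b_1$ is the first positive zero of $B$.
   Context: An entire function $E$ is Hermite–Biehler if $\lvert E(\overline{z})\rvert < \lvert E(z)\rvert$ for all $z$ in the upper half-plane $\mathbb{C}_+$. For an entire function $g$, $g^{\#}(z) = \overline{g(\overline{z})}$; $g$ is real entire if it is real on the real axis. $\mathcal{H}^{\infty}(E)$ is the set of entire functions $f$ such that $f/E$ and $f^{\#}/E$ are bounded analytic functions on $\mathbb{C}_+$, with $\lVert f/E\rVert_\infty = \sup_{x\in\mathbb{R}} \lvert f(x)/E(x)\rvert$. Write $E = A + iB$ with $A = (E+E^{\#})/2$ and $B = (E-E^{\#})/(2i)$ real entire. *)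

theory Defs
  imports "HOL-Analysis.Analysis"
begin

definition upper_half_plane :: "complex set" where
  "upper_half_plane = {z. Im z > 0}"

definition sharp :: "(complex \<Rightarrow> complex) \<Rightarrow> complex \<Rightarrow> complex" where
  "sharp g z = cnj (g (cnj z))"

definition hermite_biehler :: "(complex \<Rightarrow> complex) \<Rightarrow> bool" where
  "hermite_biehler E \<longleftrightarrow> E holomorphic_on UNIV \<and>
     (\<forall>z\<in>upper_half_plane. cmod (E (cnj z)) < cmod (E z))"

definition real_entire :: "(complex \<Rightarrow> complex) \<Rightarrow> bool" where
  "real_entire g \<longleftrightarrow> g holomorphic_on UNIV \<and> (\<forall>x::real. g (of_real x) \<in> \<real>)"

definition A_of :: "(complex \<Rightarrow> complex) \<Rightarrow> complex \<Rightarrow> complex" where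
  "A_of E z = (E z + sharp E z) / 2"

definition B_of :: "(complex \<Rightarrow> complex) \<Rightarrow> complex \<Rightarrow> complex" where
  "B_of E z = (E z - sharp E z) / (2 * \<i>)"

definition H_inf :: "(complex \<Rightarrow> complex) \<Rightarrow> (complex \<Rightarrow> complex) set" where
  "H_inf E = {f. f holomorphic_on UNIV \<and>
      (\<lambda>z. f z / E z) holomorphic_on upper_half_plane \<and>
      (\<lambda>z. sharp f z / E z) holomorphic_on upper_half_plane \<and>
      bounded ((\<lambda>z. f z / E z) ` upper_half_plane) \<and>
      bounded ((\<lambda>z. sharp f z / E z) ` upper_half_plane)}"

definition sup_norm_real :: "(complex \<Rightarrow> complex) \<Rightarrow> (complex \<Rightarrow> complex) \<Rightarrow> real" where
  "sup_norm_real f E = (SUP x::real. cmod (f (of_real x) / E (of_real x)))"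

end

theory Submission
  imports Defs "HOL-Complex_Analysis.Complex_Analysis"
begin


lemma den_ge1:
  fixes e :: real and z :: complex
  assumes "e \<ge> 0" "Im z \<ge> 0"
  shows "1 \<le> cmod (1 - \<i> * of_real e * z)"
proof -
  have "Re (1 - \<i> * of_real e * z) = 1 + e * Im z" by simp
  moreover have "1 + e * Im z \<ge> 1" using assms by simp
  ultimately show ?thesis using abs_Re_le_cmod[of "1 - \<i> * of_real e * z"] by linarith
qed

lemma den_ge:
  fixes e :: real and z :: complex
  assumes "e \<ge> 0" "Im z \<ge> 0"
  shows "e * cmod z \<le> cmod (1 - \<i> * of_real e * z)"
proof -
  have "(e * cmod z)^2 = e^2 * (Re z ^2 + Im z ^2)"
    by (simp add: power_mult_distrib cmod_power2)
  also have "\<dots> \<le> (1 + e * Im z)^2 + (e * Re z)^2"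
    using assms by (simp add: power2_eq_square algebra_simps)
  also have "\<dots> = (cmod (1 - \<i> * of_real e * z))^2"
    by (simp only: cmod_power2) (simp add: power2_eq_square algebra_simps)
  finally show ?thesis
    by (meson norm_ge_zero power2_le_imp_le)
qed


lemma PL_half_plane:
  fixes g :: "complex \<Rightarrow> complex"
  assumes U: "open U" "{z. Im z \<ge> 0} \<subseteq> U" and hol: "g holomorphic_on U"
    and bnd: "\<And>z. Im z > 0 \<Longrightarrow> cmod (g z) \<le> M"
    and real_le: "\<And>x::real. cmod (g (of_real x)) \<le> 1"
    and z0: "Im z0 > 0"
  shows "cmod (g z0) \<le> 1"
proof -
  have key: "cmod (g z0) \<le> 1 + e * cmod z0" if e: "e > 0" for e
  proof -
    define q where "q z = g z / (1 - \<i> * of_real e * z)" for z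
    define M' where "M' = max M 1"
    define \<rho> where "\<rho> = cmod z0 + M' / e + 1"
    define S where "S = {z. Im z > 0 \<and> cmod z < \<rho>}"
    have M'1: "M' \<ge> 1" unfolding M'_def by simp
    have rho_gt: "\<rho> > cmod z0" unfolding \<rho>_def using M'1 e by (simp add: add_pos_nonneg)
    have erho: "e * \<rho> \<ge> M'" unfolding \<rho>_def using e M'1
      by (simp add: algebra_simps)
    have denz: "1 - \<i> * of_real e * z \<noteq> 0" if "Im z \<ge> 0" for z
      using den_ge1[of e z] that e by auto
    have openS: "open S" unfolding S_def
      by (intro open_Collect_conj open_Collect_less continuous_intros)
    have intS: "interior S = S" using openS by (simp add: interior_open)
    have closS: "closure S \<subseteq> {z. Im z \<ge> 0 \<and> cmod z \<le> \<rho>}"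
    proof (rule closure_minimal)
      show "S \<subseteq> {z. 0 \<le> Im z \<and> cmod z \<le> \<rho>}" unfolding S_def by auto
      show "closed {z. 0 \<le> Im z \<and> cmod z \<le> \<rho>}"
        by (intro closed_Collect_conj closed_Collect_le continuous_intros)
    qed
    have holq: "q holomorphic_on {z. Im z \<ge> 0}"
      unfolding q_def
      by (intro holomorphic_intros holomorphic_on_subset[OF hol U(2)]) (use denz in auto)
    have "q holomorphic_on interior S"
      using holomorphic_on_subset[OF holq, of S] intS unfolding S_def by force
    moreover have "continuous_on (closure S) q"
      using holomorphic_on_imp_continuous_on[OF holomorphic_on_subset[OF holq]] closS by auto
    moreover have "bounded S" unfolding S_def bounded_iff by (auto intro: less_imp_le)
    moreover have "cmod (q z) \<le> 1" if "z \<in> frontier S" for z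
    proof -
      have zc: "z \<in> closure S" and zn: "z \<notin> S" using that intS by (auto simp: frontier_def)
      have Iz: "Im z \<ge> 0" and rz: "cmod z \<le> \<rho>" using zc closS by auto
      show ?thesis
      proof (cases "Im z = 0")
        case True
        hence "z = of_real (Re z)" by (simp add: complex_eq_iff)
        hence "cmod (g z) \<le> 1" using real_le[of "Re z"] by simp
        moreover have "1 \<le> cmod (1 - \<i> * of_real e * z)" using den_ge1[of e z] e Iz by simp
        ultimately show ?thesis unfolding q_def norm_divide
          by (simp add: divide_le_eq_1)
      next
        case False
        hence Ip: "Im z > 0" using Iz by simp
        hence "cmod z = \<rho>" using zn rz unfolding S_def by auto
        hence "M' \<le> cmod (1 - \<i> * of_real e * z)" using den_ge[of e z] e Iz erho by simp
        moreover have "cmod (g z) \<le> M'" using bnd[OF Ip] unfolding M'_def by simp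
        ultimately show ?thesis unfolding q_def norm_divide using M'1
          by (simp add: divide_le_eq_1)
      qed
    qed
    moreover have "z0 \<in> S" unfolding S_def using z0 rho_gt by simp
    ultimately have q1: "cmod (q z0) \<le> 1" by (rule maximum_modulus_frontier)
    have "g z0 = q z0 * (1 - \<i> * of_real e * z0)" unfolding q_def using denz[of z0] z0 by simp
    hence "cmod (g z0) = cmod (q z0) * cmod (1 - \<i> * of_real e * z0)" by (simp add: norm_mult)
    also have "\<dots> \<le> 1 * cmod (1 - \<i> * of_real e * z0)"
      by (intro mult_right_mono q1) simp
    also have "\<dots> \<le> 1 + e * cmod z0"
      using norm_triangle_ineq4[of 1 "\<i> * of_real e * z0"] e by (simp add: norm_mult)
    finally show ?thesis .
  qed
  show ?thesis
  proof (rule ccontr)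
    assume "\<not> ?thesis"
    hence gt: "cmod (g z0) > 1" by simp
    define e where "e = (cmod (g z0) - 1) / (2 * (cmod z0 + 1))"
    have ep: "e > 0" unfolding e_def using gt by (intro divide_pos_pos) (auto intro: add_pos_nonneg, smt (verit) norm_ge_zero)
    have "e * cmod z0 < cmod (g z0) - 1"
    proof -
      have "e * cmod z0 \<le> e * (cmod z0 + 1)" using ep by simp
      also have "\<dots> = (cmod (g z0) - 1) / 2"
      proof -
        have p: "cmod z0 + 1 > 0" by (smt (verit) norm_ge_zero)
        show ?thesis unfolding e_def using p by (simp add: field_simps)
      qed
      also have "\<dots> < cmod (g z0) - 1" using gt by simp
      finally show ?thesis .
    qed
    thus False using key[OF ep] by simp
  qed
qed



lemma real_deriv_Re:
  assumes "h holomorphic_on S" "open S" "of_real t \<in> S"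
  shows "((\<lambda>x. Re (h (of_real x))) has_real_derivative Re (deriv h (of_real t))) (at t)"
proof -
  have "(h has_field_derivative deriv h (of_real t)) (at (of_real t))"
    using assms holomorphic_derivI by blast
  hence "((\<lambda>x. h (of_real x)) has_vector_derivative deriv h (of_real t)) (at t)"
    by (rule has_vector_derivative_real_field)
  thus ?thesis by (rule has_field_derivative_Re)
qed

lemma real_deriv_Im:
  assumes "h holomorphic_on S" "open S" "of_real t \<in> S"
  shows "((\<lambda>x. Im (h (of_real x))) has_real_derivative Im (deriv h (of_real t))) (at t)"
proof -
  have "(h has_field_derivative deriv h (of_real t)) (at (of_real t))"
    using assms holomorphic_derivI by blast
  hence "((\<lambda>x. h (of_real x)) has_vector_derivative deriv h (of_real t)) (at t)"
    by (rule has_vector_derivative_real_field)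
  thus ?thesis by (simp add: has_vector_derivative_complex_iff)
qed

lemma deriv_real_if_real:
  assumes "h holomorphic_on UNIV" "\<And>x::real. Im (h (of_real x)) = 0"
  shows "Im (deriv h (of_real t)) = 0"
proof -
  have "((\<lambda>x. Im (h (of_real x))) has_real_derivative Im (deriv h (of_real t))) (at t)"
    using real_deriv_Im[OF assms(1)] by simp
  hence "((\<lambda>x. 0) has_real_derivative Im (deriv h (of_real t))) (at t)"
    using assms(2) by simp
  thus ?thesis using DERIV_const DERIV_unique by blast
qed

lemma deriv_re_nonpos:
  assumes hol: "h holomorphic_on S" and S: "open S" "of_real x0 \<in> S"
    and r0: "Im (h (of_real x0)) = 0"
    and up: "\<And>z. z \<in> S \<Longrightarrow> Im z > 0 \<Longrightarrow> Im (h z) \<le> 0"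
  shows "Re (deriv h (of_real x0)) \<le> 0"
proof -
  define c where "c = (of_real x0 :: complex)"
  define D where "D = deriv h c"
  have "(h has_field_derivative D) (at c)"
    using assms holomorphic_derivI unfolding D_def c_def by blast
  hence lim: "((\<lambda>w. (h w - h c) / (w - c)) \<longlongrightarrow> D) (at c)"
    by (simp add: has_field_derivative_iff)
  have fl: "filterlim (\<lambda>y::real. c + \<i> * of_real y) (at c) (at_right 0)"
  proof (rule filterlim_atI)
    show "((\<lambda>y::real. c + \<i> * of_real y) \<longlongrightarrow> c) (at_right 0)"
      by (rule tendsto_eq_intros refl | simp)+
    show "\<forall>\<^sub>F y in at_right 0. c + \<i> * complex_of_real y \<noteq> c"
      by (auto simp: eventually_at_filter)
  qed
  have lim2: "((\<lambda>y::real. (h (c + \<i> * of_real y) - h c) / (\<i> * of_real y)) \<longlongrightarrow> D) (at_right 0)"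
    using filterlim_compose[OF lim fl] by simp
  hence lim3: "((\<lambda>y::real. Re ((h (c + \<i> * of_real y) - h c) / (\<i> * of_real y))) \<longlongrightarrow> Re D) (at_right 0)"
    by (rule tendsto_Re)
  obtain e where e: "e > 0" "ball c e \<subseteq> S" using S openE unfolding c_def by blast
  have ev: "\<forall>\<^sub>F y in at_right 0. Re ((h (c + \<i> * of_real y) - h c) / (\<i> * of_real y)) \<le> 0"
  proof -
    have "\<forall>\<^sub>F y in at_right (0::real). y < e" using e(1) eventually_at_right_field by blast
    moreover have "\<forall>\<^sub>F y in at_right (0::real). y > 0" by (auto simp: eventually_at_filter)
    ultimately show ?thesis
    proof eventually_elim
      case (elim y)
      have "c + \<i> * of_real y \<in> ball c e" using elim by (simp add: dist_norm norm_mult)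
      hence inS: "c + \<i> * of_real y \<in> S" using e by blast
      have Im_pos: "Im (c + \<i> * of_real y) > 0" using elim unfolding c_def by simp
      have "Re ((h (c + \<i> * of_real y) - h c) / (\<i> * of_real y)) = Im (h (c + \<i> * of_real y) - h c) / y"
        using elim by (simp add: Re_divide power2_eq_square)
      also have "\<dots> = Im (h (c + \<i> * of_real y)) / y" using r0 unfolding c_def by simp
      also have "\<dots> \<le> 0" using up[OF inS Im_pos] elim by (simp add: divide_nonpos_pos)
      finally show ?case .
    qed
  qed
  have "Re D \<le> 0" by (rule tendsto_upperbound[OF lim3 ev]) simp
  thus ?thesis unfolding D_def c_def .
qed



lemma deriv_nonzero_half:
  fixes g :: "complex \<Rightarrow> complex"
  assumes hol: "g holomorphic_on ball 0 r" and r: "r > 0" and g0: "g 0 = 0"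
    and up: "\<And>z. z \<in> ball 0 r \<Longrightarrow> Im z \<ge> 0 \<Longrightarrow> Im (g z) \<le> 0"
    and nz: "\<exists>w\<in>ball 0 r. g w \<noteq> 0"
  shows "deriv g 0 \<noteq> 0"
proof
  assume d0: "deriv g 0 = 0"
  have "(0::complex) \<in> ball 0 r" using r by simp
  note ZE = zorder_exist_zero[OF hol open_ball connected_ball this nz]
  define n where "n = nat (zorder g 0)"
  define p where "p = zor_poly g 0"
  have npos: "n > 0" using ZE[THEN conjunct1] g0 unfolding n_def by simp
  from ZE[THEN conjunct2] obtain \<rho> where rho: "\<rho> > 0" "cball (0::complex) \<rho> \<subseteq> ball 0 r"
     "zor_poly g 0 holomorphic_on cball 0 \<rho>"
     and fac0: "\<forall>w\<in>cball 0 \<rho>. g w = zor_poly g 0 w * (w - 0) ^ nat (zorder g 0) \<and> zor_poly g 0 w \<noteq> 0"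
    by (elim exE conjE) (rule that, assumption+)
  note rho = rho[folded p_def]
  note fac0 = fac0[folded p_def n_def]
  have fac: "\<And>w. w \<in> cball 0 \<rho> \<Longrightarrow> g w = p w * w ^ n \<and> p w \<noteq> 0"
    using fac0 by simp
  define c where "c = p 0"
  have c0: "c \<noteq> 0" using fac[of 0] rho(1) unfolding c_def by simp
  have holp: "p holomorphic_on ball 0 \<rho>" using rho(3) holomorphic_on_subset ball_subset_cball by blast
  have contp: "isCont p 0"
    using holomorphic_on_imp_continuous_on[OF holp] rho(1) continuous_on_eq_continuous_at[of "ball 0 \<rho>" p]
    by simp
  show False
  proof (cases "n = 1")
    case True
    obtain p' where p': "(p has_field_derivative p') (at 0)"
      using holp rho(1) holomorphic_derivI centre_in_ball open_ball by blast
    have "((\<lambda>w. p w * w) has_field_derivative c) (at 0)"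
      using DERIV_mult[OF p' DERIV_ident] unfolding c_def by simp
    hence "(g has_field_derivative c) (at 0)"
    proof (rule has_field_derivative_transform_within_open[where S="ball 0 \<rho>"])
      show "open (ball 0 \<rho>)" by simp
      show "(0::complex) \<in> ball 0 \<rho>" using rho(1) by simp
      fix x :: complex assume "x \<in> ball 0 \<rho>"
      thus "p x * x = g x" using fac[of x] True by auto
    qed
    hence "deriv g 0 = c" by (rule DERIV_imp_deriv)
    thus False using d0 c0 by simp
  next
    case False
    hence n2: "n \<ge> 2" using npos by simp
    have claim: "Im (c * cis (real n * \<theta>)) \<le> 0" if th: "0 \<le> \<theta>" "\<theta> \<le> pi" for \<theta>
    proof (rule ccontr)
      assume "\<not> ?thesis"
      hence eta: "Im (c * cis (real n * \<theta>)) > 0" by simp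
      define \<eta> where "\<eta> = Im (c * cis (real n * \<theta>))"
      obtain \<delta> where del: "\<delta> > 0" "\<And>w. dist w 0 < \<delta> \<Longrightarrow> dist (p w) (p 0) < \<eta>"
        using contp eta unfolding \<eta>_def continuous_at_eps_delta by blast
      define s where "s = min \<delta> \<rho> / 2"
      have s: "s > 0" "s < \<delta>" "s < \<rho>" using del(1) rho(1) unfolding s_def by auto
      define w where "w = of_real s * cis \<theta>"
      have nw: "cmod w = s" unfolding w_def using s by (simp add: norm_mult)
      have wc: "w \<in> cball 0 \<rho>" using nw s by simp
      have wb: "w \<in> ball 0 r" using wc rho(2) by blast
      have Imw: "Im w \<ge> 0" unfolding w_def using s th by (simp add: sin_ge_zero)
      have pw: "cmod (p w - c) < \<eta>" using del(2)[of w] nw s unfolding c_def by (simp add: dist_norm)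
      have gw: "g w = of_real (s ^ n) * (p w * cis (real n * \<theta>))"
        using fac[OF wc] unfolding w_def by (simp add: power_mult_distrib Complex.DeMoivre)
      have "Im (p w * cis (real n * \<theta>)) = \<eta> + Im ((p w - c) * cis (real n * \<theta>))"
        unfolding \<eta>_def by (simp add: algebra_simps)
      moreover have "Im ((p w - c) * cis (real n * \<theta>)) \<ge> - cmod (p w - c)"
      proof -
        have "\<bar>Im ((p w - c) * cis (real n * \<theta>))\<bar> \<le> cmod ((p w - c) * cis (real n * \<theta>))"
          by (rule abs_Im_le_cmod)
        also have "\<dots> = cmod (p w - c)" by (simp add: norm_mult)
        finally show ?thesis by linarith
      qed
      ultimately have "Im (p w * cis (real n * \<theta>)) > 0" using pw by linarith
      hence "Im (g w) > 0" unfolding gw using s by simp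
      thus False using up[OF wb Imw] by simp
    qed
    have rn: "real n \<ge> 2" using n2 by simp
    have pn: "pi / real n \<le> pi / 2" by (rule divide_left_mono) (use rn in auto)
    have c1: "Im c \<le> 0" using claim[of 0] by simp
    have pn1: "pi / real n \<le> pi" using pn pi_gt_zero by linarith
    have pn2: "pi / (2 * real n) \<le> pi" using pn1 pi_gt_zero rn by (simp add: field_simps)
    have c2: "- Im c \<le> 0"
    proof -
      have "real n * (pi / real n) = pi" using npos by simp
      thus ?thesis using claim[OF _ pn1] by (simp add: cis.ctr)
    qed
    have c3: "Re c \<le> 0"
    proof -
      have e: "real n * (pi / (2 * real n)) = pi / 2" using npos by simp
      have "Im (c * cis (pi / 2)) \<le> 0" using claim[OF _ pn2] unfolding e by simp
      thus ?thesis by (simp add: cis.ctr)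
    qed
    have c4: "- Re c \<le> 0"
    proof -
      have le: "3 * pi / (2 * real n) \<le> pi" using rn pi_gt_zero by (simp add: field_simps)
      have e: "real n * (3 * pi / (2 * real n)) = pi / 2 + pi" using npos by simp
      have "Im (c * cis (pi / 2 + pi)) \<le> 0" using claim[OF _ le] unfolding e by simp
      moreover have "sin (3 * pi / 2) = -1" using sin_add[of "pi/2" pi] by simp
      moreover have "cos (3 * pi / 2) = 0" using cos_add[of "pi/2" pi] by simp
      ultimately show ?thesis by (simp add: cis.ctr)
    qed
    have "c = 0" using c1 c2 c3 c4 by (simp add: complex_eq_iff)
    thus False using c0 by simp
  qed
qed



lemma Im_le0_of_norm:
  fixes w :: complex
  assumes "cmod (w + \<i>) \<le> cmod (w - \<i>)"
  shows "Im w \<le> 0"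
proof -
  have "(cmod (w + \<i>))^2 \<le> (cmod (w - \<i>))^2" using assms by (simp add: power_mono)
  hence "(Re w)^2 + (Im w + 1)^2 \<le> (Re w)^2 + (Im w - 1)^2" by (simp add: cmod_power2)
  thus ?thesis by (simp add: power2_eq_square algebra_simps)
qed

lemma Im_BA_neg:
  fixes e s :: complex
  assumes "cmod s < cmod e"
  shows "Im (((e - s) / (2 * \<i>)) / ((e + s) / 2)) < 0"
proof -
  have es: "e + s \<noteq> 0"
  proof
    assume "e + s = 0" hence "s = - e" by (simp add: add_eq_0_iff)
    thus False using assms by simp
  qed
  have eq: "((e - s) / (2 * \<i>)) / ((e + s) / 2) = - \<i> * ((e - s) * cnj (e + s)) / of_real ((cmod (e + s))^2)"
  proof -
    have n: "complex_of_real ((cmod (e + s))^2) = (e + s) * cnj (e + s)"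
      by (rule complex_norm_square)
    have c: "cnj (e + s) \<noteq> 0" using es by (simp only: complex_cnj_zero_iff) simp
    have eq1: "((e - s) / (2 * \<i>)) / ((e + s) / 2) = - \<i> * ((e - s) * cnj (e + s)) / ((e + s) * cnj (e + s))"
    proof -
      have gen: "\<And>u v w::complex. u \<noteq> 0 \<Longrightarrow> w \<noteq> 0 \<Longrightarrow> (v / (2 * \<i>)) / (u / 2) = - \<i> * (v * w) / (u * w)"
        by (simp add: field_simps)
      show ?thesis by (rule gen[OF es c])
    qed
    show ?thesis by (subst n, rule eq1)
  qed
  have "Re ((e - s) * cnj (e + s)) = (cmod e)^2 - (cmod s)^2"
    by (simp only: cmod_power2) (simp add: algebra_simps power2_eq_square)
  moreover have "(cmod e)^2 - (cmod s)^2 > 0" using assms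
    by (simp add: power_strict_mono)
  moreover have "(cmod (e + s))^2 > 0" using es by simp
  ultimately show ?thesis unfolding eq by (simp add: Im_divide_of_real)
qed



theorem corollary1:
  fixes E f :: "complex \<Rightarrow> complex" and bm bp :: real
  assumes "hermite_biehler E"
    and "\<forall>x::real. E (of_real x) \<noteq> 0"
    and "E 0 = 1"
    and "f \<in> H_inf E" and "real_entire f"
    and "f 0 = 1" and "sup_norm_real f E = 1"
    and "bm < 0" and "B_of E (of_real bm) = 0"
    and "\<forall>t::real. bm < t \<and> t < 0 \<longrightarrow> B_of E (of_real t) \<noteq> 0"
    and "bp > 0" and "B_of E (of_real bp) = 0"
    and "\<forall>t::real. 0 < t \<and> t < bp \<longrightarrow> B_of E (of_real t) \<noteq> 0"
  shows "\<forall>x::real. bm \<le> x \<and> x \<le> bp \<longrightarrow> Re (A_of E (of_real x)) \<le> Re (f (of_real x))"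
proof -
  have hE: "E holomorphic_on UNIV" and HB: "\<And>z. Im z > 0 \<Longrightarrow> cmod (E (cnj z)) < cmod (E z)"
    using assms(1) unfolding hermite_biehler_def upper_half_plane_def by auto
  have Ereal: "\<And>x. E (of_real x) \<noteq> 0" using assms(2) by auto
  have E0: "E 0 = 1" by (rule assms(3))
  have hf: "f holomorphic_on UNIV" and freal: "\<And>x. f (of_real x) \<in> \<real>"
    using assms(5) unfolding real_entire_def by auto
  have f0: "f 0 = 1" by (rule assms(6))
  have Fbdd: "bounded ((\<lambda>z. f z / E z) ` upper_half_plane)"
    using assms(4) unfolding H_inf_def by auto
  define Es where "Es = sharp E"
  have Es_eq: "\<And>z. Es z = cnj (E (cnj z))" unfolding Es_def sharp_def by simp
  have hEs: "Es holomorphic_on UNIV"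
  proof -
    have "cnj \<circ> E \<circ> cnj holomorphic_on UNIV"
      by (rule holomorphic_on_compose_cnj_cnj) (use hE holomorphic_on_subset in auto)
    moreover have "cnj \<circ> E \<circ> cnj = Es" using Es_eq by (auto simp: fun_eq_iff)
    ultimately show ?thesis by simp
  qed
  have Es_lt: "\<And>z. Im z > 0 \<Longrightarrow> cmod (Es z) < cmod (E z)" using HB Es_eq by simp
  have Enz: "\<And>z. Im z \<ge> 0 \<Longrightarrow> E z \<noteq> 0"
  proof -
    fix z :: complex assume "Im z \<ge> 0"
    show "E z \<noteq> 0"
    proof (cases "Im z = 0")
      case True
      hence "z = of_real (Re z)" by (simp add: complex_eq_iff)
      thus ?thesis using Ereal[of "Re z"] by simp
    next
      case False
      hence "Im z > 0" using \<open>Im z \<ge> 0\<close> by simp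
      from Es_lt[OF this] show ?thesis by auto
    qed
  qed
  have EsR: "\<And>x. Es (of_real x) = cnj (E (of_real x))" using Es_eq by simp
  define A where "A = A_of E"
  define B where "B = B_of E"
  have A_eq: "\<And>z. A z = (E z + Es z) / 2" unfolding A_def A_of_def Es_def by simp
  have B_eq: "\<And>z. B z = (E z - Es z) / (2 * \<i>)" unfolding B_def B_of_def Es_def by simp
  have hA: "A holomorphic_on UNIV"
  proof -
    have "(\<lambda>z. (E z + Es z) / 2) holomorphic_on UNIV" using hE hEs by (intro holomorphic_intros) auto
    moreover have "A = (\<lambda>z. (E z + Es z) / 2)" using A_eq by (simp add: fun_eq_iff)
    ultimately show ?thesis by simp
  qed
  have hB: "B holomorphic_on UNIV"
  proof -
    have "(\<lambda>z. (E z - Es z) / (2 * \<i>)) holomorphic_on UNIV" using hE hEs by (intro holomorphic_intros) auto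
    moreover have "B = (\<lambda>z. (E z - Es z) / (2 * \<i>))" using B_eq by (simp add: fun_eq_iff)
    ultimately show ?thesis by simp
  qed
  have AR: "\<And>x. A (of_real x) = of_real (Re (E (of_real x)))"
    unfolding A_eq EsR by (simp add: complex_eq_iff)
  have BR: "\<And>x. B (of_real x) = of_real (Im (E (of_real x)))"
    unfolding B_eq EsR by (simp add: complex_eq_iff)
  have fR: "\<And>x. f (of_real x) = of_real (Re (f (of_real x)))"
    using freal by (simp add: complex_is_Real_iff complex_eq_iff)
  have EAB: "\<And>z. E z = A z + \<i> * B z" unfolding A_eq B_eq by (simp add: field_simps)
  have EsAB: "\<And>z. Es z = A z - \<i> * B z" unfolding A_eq B_eq by (simp add: field_simps)
  have A0: "A 0 = 1" using AR[of 0] E0 by simp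
  have B0: "B 0 = 0" using BR[of 0] E0 by simp

  define F where "F z = f z / E z" for z
  define U0 where "U0 = {z. E z \<noteq> 0}"
  have contE: "continuous_on UNIV E" using hE holomorphic_on_imp_continuous_on by blast
  have openU0: "open U0" unfolding U0_def
    by (rule open_Collect_neq[OF contE]) (simp add: continuous_on_const)
  have U0sup: "{z. Im z \<ge> 0} \<subseteq> U0" unfolding U0_def using Enz by auto
  have hF: "F holomorphic_on U0" unfolding F_def U0_def
    by (intro holomorphic_intros holomorphic_on_subset[OF hE] holomorphic_on_subset[OF hf]) auto
  obtain M where M: "\<And>z. Im z > 0 \<Longrightarrow> cmod (F z) \<le> M"
    using Fbdd unfolding bounded_iff upper_half_plane_def F_def by auto
  have clos: "closure upper_half_plane \<subseteq> {z. Im z \<ge> 0}"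
  proof (rule closure_minimal)
    show "upper_half_plane \<subseteq> {z. 0 \<le> Im z}" unfolding upper_half_plane_def by auto
    show "closed {z. 0 \<le> Im z}" by (intro closed_Collect_le continuous_intros)
  qed
  have F_le_real: "cmod (F (of_real x)) \<le> 1" for x
  proof -
    have xcl: "of_real x \<in> closure upper_half_plane"
      unfolding closure_approachable
    proof (intro allI impI)
      fix e :: real assume e: "e > 0"
      show "\<exists>y\<in>upper_half_plane. dist y (of_real x) < e"
        by (rule bexI[of _ "of_real x + \<i> * of_real (e/2)"])
           (use e in \<open>auto simp: upper_half_plane_def dist_norm norm_mult\<close>)
    qed
    have cont: "continuous_on (closure upper_half_plane) F"
      using holomorphic_on_imp_continuous_on[OF hF] clos U0sup continuous_on_subset by blast
    have bndR: "cmod (F (of_real y)) \<le> M" for y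
    proof -
      have ycl: "of_real y \<in> closure upper_half_plane"
        unfolding closure_approachable
      proof (intro allI impI)
        fix e :: real assume e: "e > 0"
        show "\<exists>z\<in>upper_half_plane. dist z (of_real y) < e"
          by (rule bexI[of _ "of_real y + \<i> * of_real (e/2)"])
             (use e in \<open>auto simp: upper_half_plane_def dist_norm norm_mult\<close>)
      qed
      show ?thesis
        by (rule continuous_on_closure_norm_le[OF cont _ ycl]) (auto simp: upper_half_plane_def M)
    qed
    have bdd: "bdd_above (range (\<lambda>y. cmod (F (of_real y))))"
      by (rule bdd_aboveI[of _ M]) (use bndR in auto)
    have "cmod (F (of_real x)) \<le> (SUP y. cmod (F (of_real y)))"
      by (rule cSUP_upper[OF _ bdd]) simp
    also have "\<dots> = 1" using assms(7) unfolding sup_norm_real_def F_def by simp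
    finally show ?thesis .
  qed
  have F_le_H: "cmod (F z) \<le> 1" if "Im z > 0" for z
    by (rule PL_half_plane[OF openU0 U0sup hF M F_le_real that])
  have f_le_E: "cmod (f z) \<le> cmod (E z)" if "Im z \<ge> 0" for z
  proof -
    have "cmod (F z) \<le> 1"
    proof (cases "Im z = 0")
      case True
      hence "z = of_real (Re z)" by (simp add: complex_eq_iff)
      thus ?thesis using F_le_real[of "Re z"] by simp
    next
      case False thus ?thesis using F_le_H that by simp
    qed
    moreover have "E z \<noteq> 0" using Enz that by simp
    ultimately show ?thesis unfolding F_def by (simp add: norm_divide divide_le_eq_1 split: if_splits)
  qed

  have Geps: "cmod (Es z - of_real \<epsilon> * f z) \<le> cmod (E z - of_real \<epsilon> * f z)"
    if eps: "0 < \<epsilon>" "\<epsilon> < 1" and z: "Im z > 0" for \<epsilon> z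
  proof -
    define G where "G w = (Es w - of_real \<epsilon> * f w) / (E w - of_real \<epsilon> * f w)" for w
    define U1 where "U1 = {w. E w \<noteq> of_real \<epsilon> * f w}"
    have den_lb: "(1 - \<epsilon>) * cmod (E w) \<le> cmod (E w - of_real \<epsilon> * f w)" if "Im w \<ge> 0" for w
    proof -
      have "cmod (of_real \<epsilon> * f w) \<le> \<epsilon> * cmod (E w)"
        using f_le_E[OF that] eps by (simp add: norm_mult)
      moreover have "cmod (E w) - cmod (of_real \<epsilon> * f w) \<le> cmod (E w - of_real \<epsilon> * f w)"
        by (rule norm_triangle_ineq2)
      ultimately show ?thesis by (simp add: algebra_simps)
    qed
    have dnz: "E w - of_real \<epsilon> * f w \<noteq> 0" if "Im w \<ge> 0" for w
    proof -
      have "(1 - \<epsilon>) * cmod (E w) > 0" using Enz[OF that] eps by simp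
      thus ?thesis using den_lb[OF that] by auto
    qed
    have openU1: "open U1" unfolding U1_def
      by (rule open_Collect_neq[OF contE]) (intro holomorphic_on_imp_continuous_on holomorphic_intros hf)
    have U1sup: "{w. Im w \<ge> 0} \<subseteq> U1" unfolding U1_def using dnz by auto
    have hG: "G holomorphic_on U1" unfolding G_def U1_def
      by (intro holomorphic_intros holomorphic_on_subset[OF hE] holomorphic_on_subset[OF hf]
          holomorphic_on_subset[OF hEs]) auto
    have Gb: "cmod (G w) \<le> 2 / (1 - \<epsilon>)" if "Im w > 0" for w
    proof -
      have w0: "Im w \<ge> 0" using that by simp
      have Ep: "cmod (E w) > 0" using Enz[OF w0] by simp
      have "cmod (Es w - of_real \<epsilon> * f w) \<le> cmod (Es w) + cmod (of_real \<epsilon> * f w)"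
        by (rule norm_triangle_ineq4)
      also have "\<dots> \<le> cmod (E w) + cmod (E w)"
        using Es_lt[OF that] f_le_E[OF w0] eps by (intro add_mono) (auto simp: norm_mult mult_le_one
          intro: order_trans[OF mult_left_le_one_le])
      finally have num: "cmod (Es w - of_real \<epsilon> * f w) \<le> 2 * cmod (E w)" by simp
      have "cmod (G w) = cmod (Es w - of_real \<epsilon> * f w) / cmod (E w - of_real \<epsilon> * f w)"
        unfolding G_def by (simp add: norm_divide)
      also have "\<dots> \<le> (2 * cmod (E w)) / ((1 - \<epsilon>) * cmod (E w))"
        by (intro frac_le num den_lb w0) (use eps Ep in auto)
      also have "\<dots> = 2 / (1 - \<epsilon>)" using Ep by simp
      finally show ?thesis .
    qed
    have Greal: "cmod (G (of_real x)) \<le> 1" for x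
    proof -
      have "cnj (f (of_real x)) = f (of_real x)" using freal[of x] Reals_cnj_iff by blast
      hence "Es (of_real x) - of_real \<epsilon> * f (of_real x) = cnj (E (of_real x) - of_real \<epsilon> * f (of_real x))"
        using EsR by simp
      hence "cmod (Es (of_real x) - of_real \<epsilon> * f (of_real x)) = cmod (E (of_real x) - of_real \<epsilon> * f (of_real x))"
        by (simp only: complex_mod_cnj)
      moreover have "E (of_real x) - of_real \<epsilon> * f (of_real x) \<noteq> 0" using dnz[of "of_real x"] by simp
      ultimately show ?thesis unfolding G_def by (simp add: norm_divide)
    qed
    have "cmod (G z) \<le> 1" by (rule PL_half_plane[OF openU1 U1sup hG Gb Greal z])
    moreover have "E z - of_real \<epsilon> * f z \<noteq> 0" using dnz z by simp
    ultimately show ?thesis unfolding G_def by (simp add: norm_divide divide_le_eq_1 split: if_splits)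
  qed
  have key: "cmod (Es z - f z) \<le> cmod (E z - f z)" if z: "Im z > 0" for z
  proof -
    have l1: "((\<lambda>\<epsilon>::real. cmod (Es z - of_real \<epsilon> * f z)) \<longlongrightarrow> cmod (Es z - of_real 1 * f z)) (at_left 1)"
      by (intro tendsto_intros)
    have l2: "((\<lambda>\<epsilon>::real. cmod (E z - of_real \<epsilon> * f z)) \<longlongrightarrow> cmod (E z - of_real 1 * f z)) (at_left 1)"
      by (intro tendsto_intros)
    have ev: "\<forall>\<^sub>F \<epsilon> in at_left (1::real). cmod (Es z - of_real \<epsilon> * f z) \<le> cmod (E z - of_real \<epsilon> * f z)"
    proof -
      have "\<forall>\<^sub>F \<epsilon> in at_left (1::real). \<epsilon> \<in> {0<..<1}" by (rule eventually_at_left_real) simp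
      thus ?thesis by eventually_elim (use Geps z in auto)
    qed
    have "cmod (Es z - of_real 1 * f z) \<le> cmod (E z - of_real 1 * f z)"
      by (rule tendsto_le[OF _ l2 l1 ev]) simp
    thus ?thesis by simp
  qed

  have Bnz: "B z \<noteq> 0" if "Im z > 0" for z
  proof
    assume "B z = 0"
    hence "E z = Es z" unfolding B_eq by simp
    thus False using Es_lt[OF that] by simp
  qed
  define R where "R z = (f z - A z) / B z" for z
  have ImR: "Im (R z) \<le> 0" if z: "Im z > 0" for z
  proof -
    have Bz: "B z \<noteq> 0" using Bnz z by simp
    have e1: "E z - f z = B z * (\<i> - R z)" unfolding R_def EAB using Bz by (simp add: field_simps)
    have e2: "Es z - f z = - (B z * (R z + \<i>))" unfolding R_def EsAB using Bz by (simp add: field_simps)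
    have "cmod (B z) * cmod (R z + \<i>) \<le> cmod (B z) * cmod (R z - \<i>)"
    proof -
      have "cmod (B z) * cmod (R z + \<i>) = cmod (Es z - f z)" unfolding e2 by (simp add: norm_mult)
      also have "\<dots> \<le> cmod (E z - f z)" by (rule key[OF z])
      also have "\<dots> = cmod (B z) * cmod (R z - \<i>)" unfolding e1
        by (simp add: norm_mult norm_minus_commute)
      finally show ?thesis .
    qed
    hence "cmod (R z + \<i>) \<le> cmod (R z - \<i>)" using Bz by simp
    thus ?thesis by (rule Im_le0_of_norm)
  qed
  define SB where "SB = {z. B z \<noteq> 0}"
  have contB: "continuous_on UNIV B" using hB holomorphic_on_imp_continuous_on by blast
  have openSB: "open SB" unfolding SB_def
    by (rule open_Collect_neq[OF contB]) (simp add: continuous_on_const)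
  have hR: "R holomorphic_on SB" unfolding R_def SB_def
    by (intro holomorphic_intros holomorphic_on_subset[OF hA] holomorphic_on_subset[OF hf]
          holomorphic_on_subset[OF hB]) auto
  define a where "a t = Re (E (of_real t))" for t :: real
  define b where "b t = Im (E (of_real t))" for t :: real
  define fr where "fr t = Re (f (of_real t))" for t :: real
  define k where "k t = fr t - a t" for t :: real
  define r where "r t = Re (R (of_real t))" for t :: real
  have r_eq: "r t = k t / b t" for t
  proof -
    have "R (of_real t) = of_real ((fr t - a t) / b t)"
      unfolding R_def using fR[of t] AR[of t] BR[of t] unfolding fr_def a_def b_def
      by (metis of_real_diff of_real_divide)
    thus ?thesis unfolding r_def k_def by simp
  qed
  have ImR_real: "Im (R (of_real t)) = 0" for t
  proof -
    have "R (of_real t) = of_real ((fr t - a t) / b t)"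
      unfolding R_def using fR[of t] AR[of t] BR[of t] unfolding fr_def a_def b_def
      by (metis of_real_diff of_real_divide)
    thus ?thesis by simp
  qed
  have b_B: "b t = Re (B (of_real t))" for t unfolding b_def BR by simp
  have a_A: "a t = Re (A (of_real t))" for t unfolding a_def AR by simp
  have Bt_nz: "b t \<noteq> 0 \<longleftrightarrow> B (of_real t) \<noteq> 0" for t unfolding b_def BR by simp
  have r_mono: "r t \<le> r s" if st: "s \<le> t" and nz: "\<And>x. s \<le> x \<Longrightarrow> x \<le> t \<Longrightarrow> B (of_real x) \<noteq> 0" for s t
    unfolding r_def
  proof (rule DERIV_nonpos_imp_nonincreasing[OF st])
    fix x assume x: "s \<le> x" "x \<le> t"
    have xs: "of_real x \<in> SB" using nz[OF x] unfolding SB_def by simp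
    show "\<exists>y. ((\<lambda>x. Re (R (of_real x))) has_real_derivative y) (at x) \<and> y \<le> 0"
    proof (intro exI conjI)
      show "((\<lambda>x. Re (R (of_real x))) has_real_derivative Re (deriv R (of_real x))) (at x)"
        by (rule real_deriv_Re[OF hR openSB xs])
      show "Re (deriv R (of_real x)) \<le> 0"
        by (rule deriv_re_nonpos[OF hR openSB xs ImR_real]) (use ImR in auto)
    qed
  qed

  define SA where "SA = {z. A z \<noteq> 0}"
  have contA: "continuous_on UNIV A" using hA holomorphic_on_imp_continuous_on by blast
  have openSA: "open SA" unfolding SA_def
    by (rule open_Collect_neq[OF contA]) (simp add: continuous_on_const)
  obtain \<rho> where rho: "\<rho> > 0" "ball 0 \<rho> \<subseteq> SA"
    using openSA A0 unfolding SA_def by (metis mem_Collect_eq one_neq_zero openE)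
  define g where "g z = B z / A z" for z
  have hg: "g holomorphic_on ball 0 \<rho>" unfolding g_def
    by (intro holomorphic_intros holomorphic_on_subset[OF hA] holomorphic_on_subset[OF hB])
       (use rho in \<open>auto simp: SA_def\<close>)
  have Img_up: "Im (g z) < 0" if "Im z > 0" for z
  proof -
    have "g z = ((E z - Es z) / (2 * \<i>)) / ((E z + Es z) / 2)" unfolding g_def A_eq B_eq ..
    thus ?thesis using Im_BA_neg[OF Es_lt[OF that]] by simp
  qed
  have Img_real: "Im (g (of_real x)) = 0" for x
    unfolding g_def AR BR by (metis Im_complex_of_real of_real_divide)
  have g0: "g 0 = 0" unfolding g_def B0 by simp
  have dg: "deriv g 0 \<noteq> 0"
  proof (rule deriv_nonzero_half[OF hg rho(1) g0])
    fix z :: complex assume z: "z \<in> ball 0 \<rho>" "Im z \<ge> 0"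
    show "Im (g z) \<le> 0"
    proof (cases "Im z = 0")
      case True
      hence "z = of_real (Re z)" by (simp add: complex_eq_iff)
      thus ?thesis using Img_real[of "Re z"] by simp
    next
      case False thus ?thesis using Img_up[of z] z by simp
    qed
  next
    show "\<exists>w\<in>ball 0 \<rho>. g w \<noteq> 0"
    proof (intro bexI)
      show "g (\<i> * of_real (\<rho>/2)) \<noteq> 0" using Img_up[of "\<i> * of_real (\<rho>/2)"] rho(1) by auto
      show "\<i> * of_real (\<rho>/2) \<in> ball 0 \<rho>" using rho(1) by (simp add: norm_mult)
    qed
  qed
  have dA: "(A has_field_derivative deriv A 0) (at 0)" using hA holomorphic_derivI by blast
  have dB: "(B has_field_derivative deriv B 0) (at 0)" using hB holomorphic_derivI by blast
  have "(g has_field_derivative (deriv B 0 * A 0 - B 0 * deriv A 0) / (A 0 * A 0)) (at 0)"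
    unfolding g_def[abs_def] by (rule DERIV_divide[OF dB dA]) (simp add: A0)
  hence "(g has_field_derivative deriv B 0) (at 0)" by (simp add: A0 B0)
  hence dg_eq: "deriv g 0 = deriv B 0" by (rule DERIV_imp_deriv)
  have ImdB: "Im (deriv B 0) = 0"
    using deriv_real_if_real[OF hB, of 0] BR by simp
  have RedB: "Re (deriv B 0) \<le> 0"
  proof -
    have "Re (deriv g (of_real 0)) \<le> 0"
    proof (rule deriv_re_nonpos[OF hg open_ball])
      show "of_real 0 \<in> ball (0::complex) \<rho>" using rho by simp
      show "Im (g (of_real 0)) = 0" by (rule Img_real)
      fix z assume "z \<in> ball 0 \<rho>" "Im z > 0"
      thus "Im (g z) \<le> 0" using Img_up[of z] by simp
    qed
    thus ?thesis using dg_eq by simp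
  qed
  define b' where "b' = Re (deriv B 0)"
  have b'neg: "b' < 0"
  proof -
    have "Re (deriv B 0) \<noteq> 0"
    proof
      assume "Re (deriv B 0) = 0"
      hence "deriv B 0 = 0" using ImdB by (simp add: complex_eq_iff)
      thus False using dg dg_eq by simp
    qed
    thus ?thesis unfolding b'_def using RedB by simp
  qed
  have db: "(b has_real_derivative b') (at 0)"
  proof -
    have "((\<lambda>x. Re (B (of_real x))) has_real_derivative Re (deriv B (of_real 0))) (at 0)"
      by (rule real_deriv_Re[OF hB]) auto
    moreover have "(\<lambda>x. Re (B (of_real x))) = b" using b_B by (simp add: fun_eq_iff)
    ultimately show ?thesis unfolding b'_def by simp
  qed
  have b0: "b 0 = 0" using b_B[of 0] B0 by simp
  have contb: "continuous_on UNIV b"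
  proof -
    have "isCont b x" for x
    proof -
      have "((\<lambda>x. Re (B (of_real x))) has_real_derivative Re (deriv B (of_real x))) (at x)"
        by (rule real_deriv_Re[OF hB]) auto
      moreover have "(\<lambda>x. Re (B (of_real x))) = b" using b_B by (simp add: fun_eq_iff)
      ultimately show ?thesis using DERIV_isCont by metis
    qed
    thus ?thesis by (simp add: continuous_at_imp_continuous_on)
  qed
  have b_neg: "b t < 0" if t: "0 < t" "t < bp" for t
  proof (rule ccontr)
    assume "\<not> b t < 0"
    moreover have "b t \<noteq> 0" using assms(13) t Bt_nz unfolding B_def by auto
    ultimately have bt: "b t > 0" by simp
    obtain d where d: "d > 0" "\<And>h. h > 0 \<Longrightarrow> h < d \<Longrightarrow> b (0 + h) < b 0"
      using DERIV_neg_dec_right[OF db b'neg] by blast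
    define s where "s = min d t / 2"
    have s: "0 < s" "s < d" "s < t" using d(1) t unfolding s_def by auto
    have bs: "b s < 0" using d(2)[of s] s b0 by simp
    have cst: "continuous_on {s..t} b" using continuous_on_subset[OF contb] by blast
    obtain x where x: "s \<le> x" "x \<le> t" "b x = 0"
      using IVT'[of b s 0 t, OF _ _ _ cst] bs bt s by auto
    have "0 < x" "x < bp" using x s t by linarith+
    hence "B (of_real x) \<noteq> 0" using assms(13) unfolding B_def by blast
    hence "b x \<noteq> 0" using Bt_nz by blast
    thus False using x by simp
  qed
  have b_pos: "b t > 0" if t: "bm < t" "t < 0" for t
  proof (rule ccontr)
    assume "\<not> b t > 0"
    moreover have "b t \<noteq> 0" using assms(10) t Bt_nz unfolding B_def by auto
    ultimately have bt: "b t < 0" by simp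
    obtain d where d: "d > 0" "\<And>h. h > 0 \<Longrightarrow> h < d \<Longrightarrow> b 0 < b (0 - h)"
      using DERIV_neg_dec_left[OF db b'neg] by blast
    define s where "s = min d (- t) / 2"
    have s: "0 < s" "s < d" "s < - t" using d(1) t unfolding s_def by auto
    have bs: "b (- s) > 0" using d(2)[of s] s b0 by simp
    have cst: "continuous_on {t..-s} b" using continuous_on_subset[OF contb] by blast
    obtain x where x: "t \<le> x" "x \<le> - s" "b x = 0"
      using IVT'[of b t 0 "- s", OF _ _ _ cst] bs bt s by auto
    have "bm < x" "x < 0" using x s t by linarith+
    hence "B (of_real x) \<noteq> 0" using assms(10) unfolding B_def by blast
    hence "b x \<noteq> 0" using Bt_nz by blast
    thus False using x by simp
  qed

  have F0: "F 0 = 1" unfolding F_def f0 E0 by simp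
  have U00: "of_real 0 \<in> U0" unfolding U0_def using E0 by simp
  have dF: "Re (deriv F 0) = 0"
  proof -
    have d: "((\<lambda>x. Re (F (of_real x))) has_real_derivative Re (deriv F (of_real 0))) (at 0)"
      by (rule real_deriv_Re[OF hF openU0 U00])
    have "Re (deriv F (of_real 0)) = 0"
    proof (rule DERIV_local_max[OF d, of 1])
      show "\<forall>y. \<bar>0 - y\<bar> < 1 \<longrightarrow> Re (F (of_real y)) \<le> Re (F (of_real 0))"
      proof (intro allI impI)
        fix y :: real
        have "Re (F (of_real y)) \<le> cmod (F (of_real y))" by (rule complex_Re_le_cmod)
        also have "\<dots> \<le> 1" by (rule F_le_real)
        finally show "Re (F (of_real y)) \<le> Re (F (of_real 0))" using F0 by simp
      qed
    qed simp
    thus ?thesis by simp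
  qed
  have df: "(f has_field_derivative deriv f 0) (at 0)" using hf holomorphic_derivI by blast
  have dE: "(E has_field_derivative deriv E 0) (at 0)" using hE holomorphic_derivI by blast
  have "(F has_field_derivative (deriv f 0 * E 0 - f 0 * deriv E 0) / (E 0 * E 0)) (at 0)"
    unfolding F_def[abs_def] by (rule DERIV_divide[OF df dE]) (simp add: E0)
  hence "(F has_field_derivative deriv f 0 - deriv E 0) (at 0)" by (simp add: E0 f0)
  hence dF_eq: "deriv F 0 = deriv f 0 - deriv E 0" by (rule DERIV_imp_deriv)
  have dEs: "(Es has_field_derivative cnj (deriv E 0)) (at 0)"
  proof -
    have "(E has_field_derivative deriv E 0) (at (cnj 0))" using dE by simp
    hence "(cnj \<circ> E \<circ> cnj has_field_derivative cnj (deriv E 0)) (at 0)"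
      by (rule has_field_derivative_cnj_cnj)
    moreover have "cnj \<circ> E \<circ> cnj = Es" using Es_eq by (auto simp: fun_eq_iff)
    ultimately show ?thesis by simp
  qed
  have "((\<lambda>z. (E z + Es z) / 2) has_field_derivative (deriv E 0 + cnj (deriv E 0)) / 2) (at 0)"
    using DERIV_cdivide[OF DERIV_add[OF dE dEs], of 2] by simp
  moreover have "(\<lambda>z. (E z + Es z) / 2) = A" using A_eq by (simp add: fun_eq_iff)
  ultimately have "(A has_field_derivative (deriv E 0 + cnj (deriv E 0)) / 2) (at 0)" by simp
  hence dA_eq: "deriv A 0 = (deriv E 0 + cnj (deriv E 0)) / 2" by (rule DERIV_imp_deriv)
  have k_fun: "k = (\<lambda>x. Re (f (of_real x)) - Re (A (of_real x)))"
    unfolding k_def fr_def by (simp add: fun_eq_iff a_A)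
  have dk_any: "(k has_real_derivative Re (deriv f (of_real x)) - Re (deriv A (of_real x))) (at x)" for x
    unfolding k_fun
    by (intro DERIV_diff real_deriv_Re[OF hf open_UNIV] real_deriv_Re[OF hA open_UNIV]) auto
  have dk: "(k has_real_derivative 0) (at 0)"
  proof -
    have "Re (deriv f 0) - Re (deriv A 0) = 0" using dF unfolding dF_eq dA_eq by simp
    thus ?thesis using dk_any[of 0] by simp
  qed
  have k0: "k 0 = 0" unfolding k_def fr_def a_def using f0 E0 by simp
  have contk: "isCont k x" for x using dk_any[of x] DERIV_isCont by blast
  have rlim: "(r \<longlongrightarrow> 0) (at 0)"
  proof -
    have l1: "((\<lambda>y. (k y - k 0) / (y - 0)) \<longlongrightarrow> 0) (at 0)"
      using dk by (simp add: has_field_derivative_iff)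
    have l2: "((\<lambda>y. (b y - b 0) / (y - 0)) \<longlongrightarrow> b') (at 0)"
      using db by (simp add: has_field_derivative_iff)
    have "((\<lambda>y. ((k y - k 0) / (y - 0)) / ((b y - b 0) / (y - 0))) \<longlongrightarrow> 0 / b') (at 0)"
      by (rule tendsto_divide[OF l1 l2]) (use b'neg in simp)
    hence l3: "((\<lambda>y. ((k y - k 0) / (y - 0)) / ((b y - b 0) / (y - 0))) \<longlongrightarrow> 0) (at 0)" by simp
    have ev: "\<forall>\<^sub>F y in at 0. ((k y - k 0) / (y - 0)) / ((b y - b 0) / (y - 0)) = r y"
    proof -
      have "\<forall>\<^sub>F y in at (0::real). y \<noteq> 0" by (simp add: eventually_at_filter)
      thus ?thesis
      proof eventually_elim
        case (elim y)
        thus ?case unfolding r_eq using k0 b0 by (simp add: field_simps)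
      qed
    qed
    show ?thesis using l3 tendsto_cong[OF ev] by simp
  qed

  have rsmall: "\<exists>\<delta>>0. \<forall>y. y \<noteq> 0 \<and> \<bar>y\<bar> < \<delta> \<longrightarrow> \<bar>r y\<bar> < e" if e: "e > 0" for e
    using LIM_D[OF rlim e] by simp
  have kpos: "k x \<ge> 0" if x: "0 < x" "x < bp" for x
  proof -
    have rx: "r x \<le> 0"
    proof (rule ccontr)
      assume "\<not> r x \<le> 0"
      hence rxp: "r x > 0" by simp
      obtain \<delta> where del: "\<delta> > 0" "\<And>y. y \<noteq> 0 \<Longrightarrow> \<bar>y\<bar> < \<delta> \<Longrightarrow> \<bar>r y\<bar> < r x"
        using rsmall[OF rxp] by blast
      define y where "y = min \<delta> x / 2"
      have y: "0 < y" "y < \<delta>" "y < x" using del(1) x unfolding y_def by auto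
      have "r x \<le> r y"
      proof (rule r_mono)
        show "y \<le> x" using y by simp
        fix z assume "y \<le> z" "z \<le> x"
        hence "0 < z" "z < bp" using y x by linarith+
        thus "B (of_real z) \<noteq> 0" using assms(13) unfolding B_def by blast
      qed
      moreover have "\<bar>r y\<bar> < r x" using del(2)[of y] y by simp
      ultimately show False by simp
    qed
    have bx: "b x < 0" using b_neg x by simp
    have "k x = r x * b x" unfolding r_eq using bx by simp
    thus ?thesis using rx bx by (simp add: mult_nonpos_nonpos)
  qed
  have kneg: "k x \<ge> 0" if x: "bm < x" "x < 0" for x
  proof -
    have rx: "r x \<ge> 0"
    proof (rule ccontr)
      assume "\<not> r x \<ge> 0"
      hence rxn: "- r x > 0" by simp
      obtain \<delta> where del: "\<delta> > 0" "\<And>y. y \<noteq> 0 \<Longrightarrow> \<bar>y\<bar> < \<delta> \<Longrightarrow> \<bar>r y\<bar> < - r x"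
        using rsmall[OF rxn] by blast
      define y where "y = - (min \<delta> (- x) / 2)"
      have y: "y < 0" "\<bar>y\<bar> < \<delta>" "x < y" using del(1) x unfolding y_def by auto
      have "r y \<le> r x"
      proof (rule r_mono)
        show "x \<le> y" using y by simp
        fix z assume "x \<le> z" "z \<le> y"
        hence "bm < z" "z < 0" using y x by linarith+
        thus "B (of_real z) \<noteq> 0" using assms(10) unfolding B_def by blast
      qed
      moreover have "\<bar>r y\<bar> < - r x" using del(2)[of y] y by simp
      ultimately show False by simp
    qed
    have bx: "b x > 0" using b_pos x by simp
    have "k x = r x * b x" unfolding r_eq using bx by simp
    thus ?thesis using rx bx by simp
  qed
  have kall: "k x \<ge> 0" if x: "bm \<le> x" "x \<le> bp" for x
  proof -
    consider "x = bm" | "bm < x \<and> x < 0" | "x = 0" | "0 < x \<and> x < bp" | "x = bp"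
      using x by linarith
    thus ?thesis
    proof cases
      case 1
      have "(k \<longlongrightarrow> k bm) (at_right bm)"
        using contk[of bm] by (simp add: isCont_def filterlim_at_split)
      moreover have "\<forall>\<^sub>F t in at_right bm. 0 \<le> k t"
      proof -
        have "\<forall>\<^sub>F t in at_right bm. t \<in> {bm<..<0}" by (rule eventually_at_right_real) (use assms(8) in simp)
        thus ?thesis by eventually_elim (use kneg in auto)
      qed
      ultimately have "0 \<le> k bm" by (intro tendsto_lowerbound) auto
      thus ?thesis using 1 by simp
    next
      case 2 thus ?thesis using kneg by simp
    next
      case 3 thus ?thesis using k0 by simp
    next
      case 4 thus ?thesis using kpos by simp
    next
      case 5
      have "(k \<longlongrightarrow> k bp) (at_left bp)"
        using contk[of bp] by (simp add: isCont_def filterlim_at_split)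
      moreover have "\<forall>\<^sub>F t in at_left bp. 0 \<le> k t"
      proof -
        have "\<forall>\<^sub>F t in at_left bp. t \<in> {0<..<bp}" by (rule eventually_at_left_real) (use assms(11) in simp)
        thus ?thesis by eventually_elim (use kpos in auto)
      qed
      ultimately have "0 \<le> k bp" by (intro tendsto_lowerbound) auto
      thus ?thesis using 5 by simp
    qed
  qed
  show ?thesis
  proof (intro allI impI)
    fix x :: real assume "bm \<le> x \<and> x \<le> bp"
    hence "k x \<ge> 0" using kall by simp
    thus "Re (A_of E (of_real x)) \<le> Re (f (of_real x))"
      unfolding k_def fr_def a_A A_def by simp
  qed
qed


end
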